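(* For every $x\in\mathbb{X}$, with $x^+=f(x,\kappa(x))$, one has $V(x^+)\le V(x)-l(x,\kappa(x))$.
   Context: Consider the discrete-time controlled system $x^+=f(x,u)$ with state $x\in\mathbb{R}^{n}$ and control $u\in\mathbb{R}^{m}$, constraint sets $\mathbb{X}\subset\mathbb{R}^n$, $\mathbb{U}\subset\mathbb{R}^m$, $\mathbb{Y}\subset\mathbb{R}^p$, and a constraint function $h(x,u)\in\mathbb{R}^p$. A control $u$ is feasible at $x\in\mathbb{X}$ if $u\in\mathbb{U}$, $f(x,u)\in\mathbb{X}$ and $h(x,u)\in\mathbb{Y}$. A control sequence $(u(0),\ldots,u(N-1))$ is feasible from $x$ if, for the state sequence defined by $x(0)=x$ and $x(k+1)=f(x(k),u(k))$, each $u(k)$ is feasible at $x(k)$. We are given a stage cost $l(x,u)$, a terminal set $\mathbb{X}_f$ and a terminal cost $V_f$ defined on $\mathbb{X}_f$. Horizon-$N$ problem at $x$: minimize $\sum_{k=0}^{N-1}l(x(k),u(k))+V_f(x(N))$ over control sequences that are feasible from $x$ and satisfy $x(N)\in\mathbb{X}_f$. Let $V_N^0(x)$ be its minimum value, which is assumed to be attained whenever the feasible set is nonempty. Let $(u^0_N(0),\ldots,u^0_N(N-1))$ be a minimizer, and set $\kappa_N(x)=u_N^0(0)$. For $N=0$, $V_0^0(x)=V_f(x)$ for $x\in\mathbb{X}_f$. Standing assumptions: (A1) $f,l,h,V_f$ are continuous on an open set containing $\mathbb{X}\times\mathbb{U}$ (for $V_f$, an open set containing $\mathbb{X}_f$).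 The stage cost $l$ is nonnegative definite in $(x,u)$ and positive definite in $u$. $V_f$ is positive definite on $\mathbb{X}_f$. Moreover $f(0,0)=0$, $l(0,0)=0$ and $V_f(0)=0$. (A2) $\mathbb{X}$ and $\mathbb{X}_f$ are closed, $\mathbb{X}_f\subset\mathbb{X}$, $\mathbb{U}$ is compact, and $\mathbb{X},\mathbb{X}_f,\mathbb{U}$ each contain a neighborhood of the origin. (A3) For every $x\in\mathbb{X}_f$ there is a control $u$ feasible at $x$ with $f(x,u)\in\mathbb{X}_f$ and $l(x,u)+V_f(f(x,u))\le V_f(x)$. (A4) For every $x\in\mathbb{X}$ there exist an integer $N\ge0$ and a feasible control sequence of length $N$ from $x$ whose state sequence satisfies $x(N)\in\mathbb{X}_f$. For $x\in\mathbb{X}$, $N(x)$ denotes the minimum such $N$. (A5) There is an integer $M\ge 0$ with $N(x)\le M$ for all $x\in\mathbb{X}$. Define $V(x)=V^0_{N(x)}(x)$ for $x\in\mathbb{X}$. For $N(x)\ge1$ set $\kappa(x)=\kappa_{N(x)}(x)$. For $N(x)=0$ (equivalently $x\in\mathbb{X}_f$), let $\kappa(x)$ be a feasible control $u$ as in (A3). *)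

theory Defs
  imports "HOL-Analysis.Analysis"
begin

text \<open>Control sequences are functions nat => 'u; only the first N
values matter for the horizon-N problem.\<close>

definition feasible_ctrl ::
  "('x \<Rightarrow> 'u \<Rightarrow> 'x) \<Rightarrow> ('x \<Rightarrow> 'u \<Rightarrow> 'y) \<Rightarrow> 'x set \<Rightarrow> 'u set \<Rightarrow> 'y set \<Rightarrow> 'x \<Rightarrow> 'u \<Rightarrow> bool"
  where "feasible_ctrl f h X U Y x u \<longleftrightarrow> u \<in> U \<and> f x u \<in> X \<and> h x u \<in> Y"

fun traj :: "('x \<Rightarrow> 'u \<Rightarrow> 'x) \<Rightarrow> 'x \<Rightarrow> (nat \<Rightarrow> 'u) \<Rightarrow> nat \<Rightarrow> 'x" where
  "traj f x us 0 = x"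
| "traj f x us (Suc k) = f (traj f x us k) (us k)"

definition feasible_seq ::
  "('x \<Rightarrow> 'u \<Rightarrow> 'x) \<Rightarrow> ('x \<Rightarrow> 'u \<Rightarrow> 'y) \<Rightarrow> 'x set \<Rightarrow> 'u set \<Rightarrow> 'y set \<Rightarrow> nat \<Rightarrow> 'x \<Rightarrow> (nat \<Rightarrow> 'u) \<Rightarrow> bool"
  where "feasible_seq f h X U Y N x us \<longleftrightarrow>
           (\<forall>k<N. feasible_ctrl f h X U Y (traj f x us k) (us k))"

definition admissible ::
  "('x \<Rightarrow> 'u \<Rightarrow> 'x) \<Rightarrow> ('x \<Rightarrow> 'u \<Rightarrow> 'y) \<Rightarrow> 'x set \<Rightarrow> 'u set \<Rightarrow> 'y set \<Rightarrow> 'x set \<Rightarrow> nat \<Rightarrow> 'x \<Rightarrow> (nat \<Rightarrow> 'u) \<Rightarrow> bool"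
  where "admissible f h X U Y Xf N x us \<longleftrightarrow>
           feasible_seq f h X U Y N x us \<and> traj f x us N \<in> Xf"

definition cost ::
  "('x \<Rightarrow> 'u \<Rightarrow> 'x) \<Rightarrow> ('x \<Rightarrow> 'u \<Rightarrow> real) \<Rightarrow> ('x \<Rightarrow> real) \<Rightarrow> nat \<Rightarrow> 'x \<Rightarrow> (nat \<Rightarrow> 'u) \<Rightarrow> real"
  where "cost f l Vf N x us = (\<Sum>k<N. l (traj f x us k) (us k)) + Vf (traj f x us N)"

text \<open>Optimal value V_N^0(x) of the horizon-N problem (infimum; attained by assumption).\<close>
definition VN ::
  "('x \<Rightarrow> 'u \<Rightarrow> 'x) \<Rightarrow> ('x \<Rightarrow> 'u \<Rightarrow> 'y) \<Rightarrow> ('x \<Rightarrow> 'u \<Rightarrow> real) \<Rightarrow> ('x \<Rightarrow> real) \<Rightarrow>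
     'x set \<Rightarrow> 'u set \<Rightarrow> 'y set \<Rightarrow> 'x set \<Rightarrow> nat \<Rightarrow> 'x \<Rightarrow> real"
  where "VN f h l Vf X U Y Xf N x =
           Inf {cost f l Vf N x us | us. admissible f h X U Y Xf N x us}"

definition is_minimizer ::
  "('x \<Rightarrow> 'u \<Rightarrow> 'x) \<Rightarrow> ('x \<Rightarrow> 'u \<Rightarrow> 'y) \<Rightarrow> ('x \<Rightarrow> 'u \<Rightarrow> real) \<Rightarrow> ('x \<Rightarrow> real) \<Rightarrow>
     'x set \<Rightarrow> 'u set \<Rightarrow> 'y set \<Rightarrow> 'x set \<Rightarrow> nat \<Rightarrow> 'x \<Rightarrow> (nat \<Rightarrow> 'u) \<Rightarrow> bool"
  where "is_minimizer f h l Vf X U Y Xf N x us \<longleftrightarrow>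
           admissible f h X U Y Xf N x us \<and>
           (\<forall>vs. admissible f h X U Y Xf N x vs \<longrightarrow> cost f l Vf N x us \<le> cost f l Vf N x vs)"

definition Nmin ::
  "('x \<Rightarrow> 'u \<Rightarrow> 'x) \<Rightarrow> ('x \<Rightarrow> 'u \<Rightarrow> 'y) \<Rightarrow> 'x set \<Rightarrow> 'u set \<Rightarrow> 'y set \<Rightarrow> 'x set \<Rightarrow> 'x \<Rightarrow> nat"
  where "Nmin f h X U Y Xf x = (LEAST N. \<exists>us. admissible f h X U Y Xf N x us)"

definition Vfun ::
  "('x \<Rightarrow> 'u \<Rightarrow> 'x) \<Rightarrow> ('x \<Rightarrow> 'u \<Rightarrow> 'y) \<Rightarrow> ('x \<Rightarrow> 'u \<Rightarrow> real) \<Rightarrow> ('x \<Rightarrow> real) \<Rightarrow>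
     'x set \<Rightarrow> 'u set \<Rightarrow> 'y set \<Rightarrow> 'x set \<Rightarrow> 'x \<Rightarrow> real"
  where "Vfun f h l Vf X U Y Xf x = VN f h l Vf X U Y Xf (Nmin f h X U Y Xf x) x"

definition standing_assumptions ::
  "('x::euclidean_space \<Rightarrow> 'u::euclidean_space \<Rightarrow> 'x) \<Rightarrow> ('x \<Rightarrow> 'u \<Rightarrow> 'y::euclidean_space) \<Rightarrow>
     ('x \<Rightarrow> 'u \<Rightarrow> real) \<Rightarrow> ('x \<Rightarrow> real) \<Rightarrow> 'x set \<Rightarrow> 'u set \<Rightarrow> 'y set \<Rightarrow> 'x set \<Rightarrow> bool"
  where "standing_assumptions f h l Vf X U Y Xf \<longleftrightarrow>
    \<comment> \<open>(A1)\<close>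
    (\<exists>S. open S \<and> X \<times> U \<subseteq> S \<and>
         continuous_on S (\<lambda>(x, u). f x u) \<and>
         continuous_on S (\<lambda>(x, u). l x u) \<and>
         continuous_on S (\<lambda>(x, u). h x u)) \<and>
    (\<exists>T. open T \<and> Xf \<subseteq> T \<and> continuous_on T Vf) \<and>
    (\<forall>x\<in>X. \<forall>u\<in>U. l x u \<ge> 0) \<and>
    (\<forall>x\<in>X. \<forall>u\<in>U. u \<noteq> 0 \<longrightarrow> l x u > 0) \<and>
    (\<forall>x\<in>Xf. x \<noteq> 0 \<longrightarrow> Vf x > 0) \<and>
    f 0 0 = 0 \<and> l 0 0 = 0 \<and> Vf 0 = 0 \<and>
    \<comment> \<open>(A2)\<close>
    closed X \<and> closed Xf \<and> Xf \<subseteq> X \<and> compact U \<and>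
    0 \<in> interior X \<and> 0 \<in> interior Xf \<and> 0 \<in> interior U \<and>
    \<comment> \<open>(A3)\<close>
    (\<forall>x\<in>Xf. \<exists>u. feasible_ctrl f h X U Y x u \<and> f x u \<in> Xf \<and> l x u + Vf (f x u) \<le> Vf x) \<and>
    \<comment> \<open>(A4)\<close>
    (\<forall>x\<in>X. \<exists>N us. admissible f h X U Y Xf N x us) \<and>
    \<comment> \<open>(A5)\<close>
    (\<exists>M. \<forall>x\<in>X. Nmin f h X U Y Xf x \<le> M)"

end

theory Submission
  imports Defs
begin

lemma traj_shift: "traj f (f x (us 0)) (\<lambda>k. us (Suc k)) k = traj f x us (Suc k)"
  by (induction k) auto

lemma admissible_tail:
  assumes "admissible f h X U Y Xf (Suc n) x us"
  shows "admissible f h X U Y Xf n (f x (us 0)) (\<lambda>k. us (Suc k))"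
  using assms unfolding admissible_def feasible_seq_def
  by (auto simp: traj_shift simp del: traj.simps(2))

lemma admissible_cons:
  assumes "admissible f h X U Y Xf n (f x u) ws" "feasible_ctrl f h X U Y x u"
  shows "admissible f h X U Y Xf (Suc n) x (case_nat u ws)"
proof -
  have t: "traj f x (case_nat u ws) (Suc k) = traj f (f x u) ws k" for k
    using traj_shift[of f x "case_nat u ws" k] by simp
  show ?thesis using assms unfolding admissible_def feasible_seq_def
    by (auto simp: less_Suc_eq_0_disj t simp del: traj.simps(2))
qed

lemma cost_tail:
  "cost f l Vf (Suc n) x us = l x (us 0) + cost f l Vf n (f x (us 0)) (\<lambda>k. us (Suc k))"
  unfolding cost_def sum.lessThan_Suc_shift
  by (simp add: traj_shift del: traj.simps(2))

lemma VN_min: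
  assumes "is_minimizer f h l Vf X U Y Xf N z us"
  shows "VN f h l Vf X U Y Xf N z = cost f l Vf N z us"
  unfolding VN_def
  apply (rule cInf_eq_minimum)
  using assms unfolding is_minimizer_def by auto

theorem lemma2:
  fixes f :: "'x::euclidean_space \<Rightarrow> 'u::euclidean_space \<Rightarrow> 'x"
    and h :: "'x \<Rightarrow> 'u \<Rightarrow> 'y::euclidean_space"
    and l :: "'x \<Rightarrow> 'u \<Rightarrow> real"
    and Vf :: "'x \<Rightarrow> real"
    and X :: "'x set" and U :: "'u set" and Y :: "'y set" and Xf :: "'x set"
    and \<kappa> :: "'x \<Rightarrow> 'u"
  assumes std: "standing_assumptions f h l Vf X U Y Xf"
    and attained: "\<And>N x. x \<in> X \<Longrightarrow> (\<exists>us. admissible f h X U Y Xf N x us) \<Longrightarrow>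
                     (\<exists>us. is_minimizer f h l Vf X U Y Xf N x us)"
    and kappa_pos: "\<And>x. x \<in> X \<Longrightarrow> Nmin f h X U Y Xf x \<ge> 1 \<Longrightarrow>
                     (\<exists>us. is_minimizer f h l Vf X U Y Xf (Nmin f h X U Y Xf x) x us \<and> \<kappa> x = us 0)"
    and kappa_zero: "\<And>x. x \<in> X \<Longrightarrow> Nmin f h X U Y Xf x = 0 \<Longrightarrow>
                     feasible_ctrl f h X U Y x (\<kappa> x) \<and> f x (\<kappa> x) \<in> Xf \<and>
                     l x (\<kappa> x) + Vf (f x (\<kappa> x)) \<le> Vf x"
    and x: "x \<in> X"
  shows "Vfun f h l Vf X U Y Xf (f x (\<kappa> x)) \<le> Vfun f h l Vf X U Y Xf x - l x (\<kappa> x)"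
proof -
  have A4: "\<forall>x\<in>X. \<exists>N us. admissible f h X U Y Xf N x us"
    using std unfolding standing_assumptions_def by (elim conjE) assumption
  have ex: "\<exists>N us. admissible f h X U Y Xf N x us"
    using A4 x by blast
  define n where "n = Nmin f h X U Y Xf x"
  have nadm: "\<exists>us. admissible f h X U Y Xf n x us"
    unfolding n_def Nmin_def using ex by (rule LeastI_ex)
  have VN0: "VN f h l Vf X U Y Xf 0 z = Vf z" if "z \<in> Xf" for z
  proof -
    have "admissible f h X U Y Xf 0 z us" for us
      using that by (simp add: admissible_def feasible_seq_def)
    then have "is_minimizer f h l Vf X U Y Xf 0 z us" for us
      by (simp add: is_minimizer_def cost_def)
    then show ?thesis using VN_min by (fastforce simp: cost_def)
  qed
  show ?thesis
  proof (cases "n = 0")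
    case True
    then have k: "feasible_ctrl f h X U Y x (\<kappa> x) \<and> f x (\<kappa> x) \<in> Xf \<and>
                     l x (\<kappa> x) + Vf (f x (\<kappa> x)) \<le> Vf x" using kappa_zero x n_def by auto
    have xXf: "x \<in> Xf" using nadm True by (auto simp: admissible_def)
    have "admissible f h X U Y Xf 0 (f x (\<kappa> x)) us" for us
      using k by (simp add: admissible_def feasible_seq_def)
    then have N0: "Nmin f h X U Y Xf (f x (\<kappa> x)) = 0"
      unfolding Nmin_def by (intro Least_eq_0) blast
    have Nx: "Nmin f h X U Y Xf x = 0" using True unfolding n_def .
    have "Vfun f h l Vf X U Y Xf (f x (\<kappa> x)) = Vf (f x (\<kappa> x))"
      unfolding Vfun_def N0 using VN0 k by blast
    moreover have "Vfun f h l Vf X U Y Xf x = Vf x"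
      unfolding Vfun_def Nx using VN0 xXf by blast
    ultimately show ?thesis using k by linarith
  next
    case False
    then obtain m where m: "n = Suc m" by (cases n) auto
    have n1: "1 \<le> Nmin f h X U Y Xf x" using False unfolding n_def by simp
    obtain us where us0: "is_minimizer f h l Vf X U Y Xf (Nmin f h X U Y Xf x) x us" and us2: "\<kappa> x = us 0"
      using kappa_pos[OF x n1] by blast
    have us1: "is_minimizer f h l Vf X U Y Xf n x us" using us0 unfolding n_def .
    have adm: "admissible f h X U Y Xf (Suc m) x us"
      using us1 unfolding m is_minimizer_def by (elim conjE)
    have tadm: "admissible f h X U Y Xf m (f x (us 0)) (\<lambda>k. us (Suc k))"
      using admissible_tail[OF adm] .
    have "feasible_ctrl f h X U Y (traj f x us 0) (us 0)"
      using adm unfolding admissible_def feasible_seq_def by (meson zero_less_Suc)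
    then have feas0: "feasible_ctrl f h X U Y x (us 0)" by simp
    then have xp: "f x (us 0) \<in> X" by (simp add: feasible_ctrl_def)
    define p where "p = Nmin f h X U Y Xf (f x (us 0))"
    have "p \<le> m" unfolding p_def Nmin_def using tadm by (intro Least_le) blast
    moreover have "m \<le> p"
    proof -
      have "\<exists>ws. admissible f h X U Y Xf p (f x (us 0)) ws"
        unfolding p_def Nmin_def
        by (rule LeastI_ex[where P="\<lambda>N. \<exists>ws. admissible f h X U Y Xf N (f x (us 0)) ws"]) (use tadm in blast)
      then obtain ws where ws: "admissible f h X U Y Xf p (f x (us 0)) ws" ..
      have "admissible f h X U Y Xf (Suc p) x (case_nat (us 0) ws)"
        using admissible_cons[OF ws feas0] .
      then have "Nmin f h X U Y Xf x \<le> Suc p" unfolding Nmin_def by (intro Least_le) blast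
      then show ?thesis using m unfolding n_def by simp
    qed
    ultimately have pm: "p = m" by simp
    have Nm: "Nmin f h X U Y Xf (f x (us 0)) = m" using pm unfolding p_def .
    obtain ws where ws: "is_minimizer f h l Vf X U Y Xf m (f x (us 0)) ws"
      using attained[OF xp] tadm by blast
    have "Vfun f h l Vf X U Y Xf (f x (\<kappa> x)) = VN f h l Vf X U Y Xf m (f x (us 0))"
      unfolding Vfun_def us2 Nm ..
    also have "\<dots> = cost f l Vf m (f x (us 0)) ws"
      using VN_min[OF ws] .
    also have "\<dots> \<le> cost f l Vf m (f x (us 0)) (\<lambda>k. us (Suc k))"
      using ws tadm unfolding is_minimizer_def by blast
    also have "\<dots> = cost f l Vf n x us - l x (us 0)"
      unfolding m cost_tail by simp
    also have "\<dots> = Vfun f h l Vf X U Y Xf x - l x (\<kappa> x)"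
      unfolding Vfun_def VN_min[OF us0] us2 n_def ..
    finally show ?thesis .
  qed
qed

end
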